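(* Consider the online asynchronous testing setting with conflict sets described in the context, and suppose that for every $t\in\mathcal{H}^0$ and every $u\in[0,1]$, $\mathbb{P}(P_t\le u\mid\mathcal{F}^{-\mathcal{X}^{E_t}})\le u$. Let $T$ be a random time with values in $\mathbb{N}$ such that (C1) $\{T=t\}\in\mathcal{F}^{-\mathcal{X}^{t+1}}$ for every $t$, and (C2) $T$ is almost surely bounded. Then any LORD* procedure and any SAFFRON* procedure with target level $\alpha$ (with $\mathcal{F}$ the LORD* filtration, respectively the SAFFRON* filtration) satisfy $\mathrm{mFDR}(T)\le\alpha$, where $\mathrm{mFDR}(T)=\mathbb{E}|\mathcal{V}(T)|/\mathbb{E}[|\mathcal{R}(T)|\vee1]$.
   Context: Hypotheses $H_1,H_2,\dots$ are tested; the test of $H_t$ starts at step $t$, is run at a test level $\alpha_t\ge 0$ (and, for SAFFRON*-type procedures, uses a candidacy threshold $\lambda_t$ with $\alpha_t\le\lambda_t<1$), and produces a $p$-value $P_t$. $\mathcal{H}^0\subseteq\mathbb{N}$ is the fixed (unknown) set of indices of true null hypotheses. Each test $t$ has a fixed (deterministic) decision time $E_t\in\mathbb{N}$ with $E_t\ge t$. Let $R_t=\mathbf{1}\{P_t\le\alpha_t\}$ and $C_t=\mathbf{1}\{P_t\le\lambda_t\}$. Let $\{L_t\}$ be a fixed sequence of nonnegative integer lags with $L_{t+1}\le L_t+1$. The conflict set of test $t$ is $\mathcal{X}^t=\{i\in[t-1]:E_i\ge t\}\cup\big(\{t-L_t,\dots,t-1\}\cap[t-1]\big)$. The non-conflicting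 $\sigma$-algebras are $\mathcal{L}^{-\mathcal{X}^t}=\sigma(R_i: i\le t-1,\ i\notin\mathcal{X}^t)$ (LORD* filtration) and $\mathcal{S}^{-\mathcal{X}^t}=\sigma(R_i,C_i: i\le t-1,\ i\notin\mathcal{X}^t)$ (SAFFRON* filtration); $\mathcal{F}^{-\mathcal{X}^t}$ denotes the relevant one. The set of rejections by time $t$ is $\mathcal{R}(t)=\{i\in[t]: E_i\le t,\ P_i\le\alpha_i\}$ and $\mathcal{V}(t)=\mathcal{R}(t)\cap\mathcal{H}^0$. A LORD* procedure is any rule choosing each $\alpha_t\ge0$ to be $\mathcal{L}^{-\mathcal{X}^t}$-measurable such that, for all $t\in\mathbb{N}$, $\sum_{j\le t}\alpha_j\le \alpha\big((\sum_{j<t,\,j\notin\mathcal{X}^t}R_j)\vee1\big)$. A SAFFRON* procedure is any rule choosing $\alpha_t,\lambda_t$ (with $0\le\alpha_t\le\lambda_t<1$) to be $\mathcal{S}^{-\mathcal{X}^t}$-measurable such that, for all $t\in\mathbb{N}$, $\sum_{j<t,\,j\notin\mathcal{X}^t}\frac{\alpha_j}{1-\lambda_j}\mathbf{1}\{P_j>\lambda_j\}+\sum_{j\in\mathcal{X}^t\cup\{t\}}\frac{\alpha_j}{1-\lambda_j}\le\alpha\big((\sum_{j<t,\,j\notin\mathcal{X}^t}R_j)\vee1\big)$. *)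

theory Defs
  imports "HOL-Probability.Probability"
begin

text \<open>Indices of hypotheses are natural numbers t \<ge> 1 (index 0 is unused).
  P t = p-value, alpha t = test level, lam t = candidacy threshold,
  E t = decision time, L t = lag.\<close>

datatype proc_kind = LORD_star | SAFFRON_star

definition conflict_set :: "(nat \<Rightarrow> nat) \<Rightarrow> (nat \<Rightarrow> nat) \<Rightarrow> nat \<Rightarrow> nat set" where
  "conflict_set E L t =
     {i. 1 \<le> i \<and> i \<le> t - 1 \<and> E i \<ge> t} \<union> ({t - L t .. t - 1} \<inter> {1 .. t - 1})"

definition R_ind :: "(nat \<Rightarrow> 'a \<Rightarrow> real) \<Rightarrow> (nat \<Rightarrow> 'a \<Rightarrow> real) \<Rightarrow> nat \<Rightarrow> 'a \<Rightarrow> real" where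
  "R_ind P alpha i \<omega> = (if P i \<omega> \<le> alpha i \<omega> then 1 else 0)"

definition C_ind :: "(nat \<Rightarrow> 'a \<Rightarrow> real) \<Rightarrow> (nat \<Rightarrow> 'a \<Rightarrow> real) \<Rightarrow> nat \<Rightarrow> 'a \<Rightarrow> real" where
  "C_ind P lam i \<omega> = (if P i \<omega> \<le> lam i \<omega> then 1 else 0)"

definition gen_sigma :: "'a measure \<Rightarrow> ('a \<Rightarrow> real) set \<Rightarrow> 'a measure" where
  "gen_sigma M fs = sigma (space M) (\<Union>f\<in>fs. {f -` A \<inter> space M | A. A \<in> sets borel})"

definition noncf :: "(nat \<Rightarrow> nat) \<Rightarrow> (nat \<Rightarrow> nat) \<Rightarrow> nat \<Rightarrow> nat set" where
  "noncf E L t = {i. 1 \<le> i \<and> i \<le> t - 1 \<and> i \<notin> conflict_set E L t}"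

definition noncf_sigma ::
  "proc_kind \<Rightarrow> 'a measure \<Rightarrow> (nat \<Rightarrow> nat) \<Rightarrow> (nat \<Rightarrow> nat) \<Rightarrow> (nat \<Rightarrow> 'a \<Rightarrow> real)
     \<Rightarrow> (nat \<Rightarrow> 'a \<Rightarrow> real) \<Rightarrow> (nat \<Rightarrow> 'a \<Rightarrow> real) \<Rightarrow> nat \<Rightarrow> 'a measure" where
  "noncf_sigma k M E L P alpha lam t =
     (case k of
        LORD_star \<Rightarrow> gen_sigma M {R_ind P alpha i | i. i \<in> noncf E L t}
      | SAFFRON_star \<Rightarrow> gen_sigma M ({R_ind P alpha i | i. i \<in> noncf E L t}
                                      \<union> {C_ind P lam i | i. i \<in> noncf E L t}))"

definition is_LORD_star ::
  "'a measure \<Rightarrow> (nat \<Rightarrow> nat) \<Rightarrow> (nat \<Rightarrow> nat) \<Rightarrow> real \<Rightarrow> (nat \<Rightarrow> 'a \<Rightarrow> real)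
     \<Rightarrow> (nat \<Rightarrow> 'a \<Rightarrow> real) \<Rightarrow> bool" where
  "is_LORD_star M E L lvl P alpha \<longleftrightarrow>
     (\<forall>t\<ge>1. alpha t \<in> borel_measurable (noncf_sigma LORD_star M E L P alpha (\<lambda>_ _. 0) t)) \<and>
     (\<forall>t\<ge>1. \<forall>\<omega>\<in>space M.
        alpha t \<omega> \<ge> 0 \<and>
        (\<Sum>j\<in>{1..t}. alpha j \<omega>) \<le> lvl * max (\<Sum>j\<in>noncf E L t. R_ind P alpha j \<omega>) 1)"

definition is_SAFFRON_star ::
  "'a measure \<Rightarrow> (nat \<Rightarrow> nat) \<Rightarrow> (nat \<Rightarrow> nat) \<Rightarrow> real \<Rightarrow> (nat \<Rightarrow> 'a \<Rightarrow> real)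
     \<Rightarrow> (nat \<Rightarrow> 'a \<Rightarrow> real) \<Rightarrow> (nat \<Rightarrow> 'a \<Rightarrow> real) \<Rightarrow> bool" where
  "is_SAFFRON_star M E L lvl P alpha lam \<longleftrightarrow>
     (\<forall>t\<ge>1. alpha t \<in> borel_measurable (noncf_sigma SAFFRON_star M E L P alpha lam t)) \<and>
     (\<forall>t\<ge>1. lam t \<in> borel_measurable (noncf_sigma SAFFRON_star M E L P alpha lam t)) \<and>
     (\<forall>t\<ge>1. \<forall>\<omega>\<in>space M.
        0 \<le> alpha t \<omega> \<and> alpha t \<omega> \<le> lam t \<omega> \<and> lam t \<omega> < 1 \<and>
        (\<Sum>j\<in>noncf E L t. alpha j \<omega> / (1 - lam j \<omega>) * (if P j \<omega> > lam j \<omega> then 1 else 0))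
        + (\<Sum>j\<in>conflict_set E L t \<union> {t}. alpha j \<omega> / (1 - lam j \<omega>))
        \<le> lvl * max (\<Sum>j\<in>noncf E L t. R_ind P alpha j \<omega>) 1)"

definition rej_set :: "(nat \<Rightarrow> nat) \<Rightarrow> (nat \<Rightarrow> 'a \<Rightarrow> real) \<Rightarrow> (nat \<Rightarrow> 'a \<Rightarrow> real)
     \<Rightarrow> nat \<Rightarrow> 'a \<Rightarrow> nat set" where
  "rej_set E P alpha t \<omega> = {i. 1 \<le> i \<and> i \<le> t \<and> E i \<le> t \<and> P i \<omega> \<le> alpha i \<omega>}"

definition mFDR :: "'a measure \<Rightarrow> nat set \<Rightarrow> (nat \<Rightarrow> nat) \<Rightarrow> (nat \<Rightarrow> 'a \<Rightarrow> real)
     \<Rightarrow> (nat \<Rightarrow> 'a \<Rightarrow> real) \<Rightarrow> ('a \<Rightarrow> nat) \<Rightarrow> real" where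
  "mFDR M H0 E P alpha T =
     (\<integral>\<omega>. real (card (rej_set E P alpha (T \<omega>) \<omega> \<inter> H0)) \<partial>M) /
     (\<integral>\<omega>. max (real (card (rej_set E P alpha (T \<omega>) \<omega>))) 1 \<partial>M)"

end

theory Submission
  imports Defs
begin
lemma noncf_iff: "i \<in> noncf E L t \<longleftrightarrow> 1 \<le> i \<and> i < t \<and> E i < t \<and> i + L t < t"
  unfolding noncf_def conflict_set_def
  by (simp only: mem_Collect_eq Un_iff Int_iff atLeastAtMost_iff) linarith
lemma conflict_sub: "conflict_set E L t \<subseteq> {1..<t}"
  unfolding conflict_set_def by (auto simp del: atLeastAtMost_iff) (auto simp: atLeastAtMost_iff)
lemma noncf_sub: "noncf E L t \<subseteq> {1..<t}"
  by (rule subsetI) (simp add: noncf_iff)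

lemma finite_noncf: "finite (noncf E L t)"
  by (rule finite_subset[OF noncf_sub]) simp

lemma finite_conflict: "finite (conflict_set E L t)"
  by (rule finite_subset[OF conflict_sub]) simp

lemma noncf_mono:
  assumes L_lag: "\<And>t. t \<ge> 1 \<Longrightarrow> L (Suc t) \<le> L t + 1" and st: "s \<le> t"
  shows "noncf E L s \<subseteq> noncf E L t"
proof
  fix i assume i: "i \<in> noncf E L s"
  then have i1: "1 \<le> i" "i < s" "E i < s" "i + L s < s" by (auto simp: noncf_iff)
  have "i + L (s + d) < s + d" for d
  proof (induction d)
    case 0 then show ?case using i1 by simp
  next
    case (Suc d)
    have "L (Suc (s + d)) \<le> L (s + d) + 1" using L_lag[of "s + d"] i1 by simp
    then show ?case using Suc by simp
  qed
  from this[of "t - s"] st have "i + L t < t" by simp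
  then show "i \<in> noncf E L t" using i1 st by (auto simp: noncf_iff)
qed

lemma space_gen_sigma[simp]: "space (gen_sigma M fs) = space M"
  unfolding gen_sigma_def by (rule space_measure_of) auto

lemma sets_gen_sigma:
  "sets (gen_sigma M fs) = sigma_sets (space M) (\<Union>f\<in>fs. {f -` A \<inter> space M | A. A \<in> sets borel})"
  unfolding gen_sigma_def by (rule sets_measure_of) auto

lemma gen_sigma_mono:
  assumes "fs \<subseteq> fs'"
  shows "subalgebra (gen_sigma M fs') (gen_sigma M fs)"
  unfolding subalgebra_def sets_gen_sigma using assms
  by (intro conjI) (simp, rule sigma_sets_mono', use assms in blast)

lemma gen_sigma_sub:
  assumes "\<And>f. f \<in> fs \<Longrightarrow> f \<in> borel_measurable M"
  shows "subalgebra M (gen_sigma M fs)"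
  unfolding subalgebra_def sets_gen_sigma
proof (intro conjI)
  show "space (gen_sigma M fs) = space M" by simp
  show "sigma_sets (space M) (\<Union>f\<in>fs. {f -` A \<inter> space M |A. A \<in> sets borel}) \<subseteq> sets M"
  proof (rule sets.sigma_sets_subset)
    show "(\<Union>f\<in>fs. {f -` A \<inter> space M |A. A \<in> sets borel}) \<subseteq> sets M"
      using assms by (blast intro: measurable_sets)
  qed
qed

lemma subalgebra_trans:
  "subalgebra M F \<Longrightarrow> subalgebra F G \<Longrightarrow> subalgebra M G"
  unfolding subalgebra_def by auto

lemma noncf_sigma_mono:
  assumes L_lag: "\<And>t. t \<ge> 1 \<Longrightarrow> L (Suc t) \<le> L t + 1" and st: "s \<le> t"
  shows "subalgebra (noncf_sigma k M E L P alpha lam t) (noncf_sigma k M E L P alpha lam s)"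
proof (cases k)
  case LORD_star
  then show ?thesis unfolding noncf_sigma_def
    by (simp only: proc_kind.case) (rule gen_sigma_mono, use noncf_mono[of L, OF L_lag st, of E] in blast)
next
  case SAFFRON_star
  then show ?thesis unfolding noncf_sigma_def
    by (simp only: proc_kind.case) (rule gen_sigma_mono, use noncf_mono[of L, OF L_lag st, of E] in blast)
qed

lemma noncf_sigma_LORD_lam:
  "noncf_sigma LORD_star M E L P alpha lam t = noncf_sigma LORD_star M E L P alpha lam' t"
  by (simp add: noncf_sigma_def)

lemma R_ind_meas:
  assumes [measurable]: "P i \<in> borel_measurable M" "alpha i \<in> borel_measurable M"
  shows "R_ind P alpha i \<in> borel_measurable M"
  unfolding R_ind_def[abs_def] by measurable

lemma C_ind_meas:
  assumes [measurable]: "P i \<in> borel_measurable M" "lam i \<in> borel_measurable M"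
  shows "C_ind P lam i \<in> borel_measurable M"
  unfolding C_ind_def[abs_def] by measurable

lemma noncf_sigma_sub:
  assumes "\<And>i. i \<in> noncf E L t \<Longrightarrow> R_ind P alpha i \<in> borel_measurable M"
    and "\<And>i. k = SAFFRON_star \<Longrightarrow> i \<in> noncf E L t \<Longrightarrow> C_ind P lam i \<in> borel_measurable M"
  shows "subalgebra M (noncf_sigma k M E L P alpha lam t)"
proof (cases k)
  case LORD_star
  then show ?thesis unfolding noncf_sigma_def
    by (simp only: proc_kind.case) (rule gen_sigma_sub, use assms in blast)
next
  case SAFFRON_star
  then show ?thesis unfolding noncf_sigma_def
    by (simp only: proc_kind.case) (rule gen_sigma_sub, use assms SAFFRON_star in blast)
qed

lemma sumR_le_card:
  "(\<Sum>j\<in>noncf E L \<tau>. R_ind P alpha j \<omega>) \<le> real (card (rej_set E P alpha \<tau> \<omega>))"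
proof -
  have "(\<Sum>j\<in>noncf E L \<tau>. R_ind P alpha j \<omega>) = (\<Sum>j\<in>{j\<in>noncf E L \<tau>. P j \<omega> \<le> alpha j \<omega>}. 1)"
    by (subst sum.inter_filter[OF finite_noncf]) (simp add: R_ind_def)
  also have "\<dots> = real (card {j\<in>noncf E L \<tau>. P j \<omega> \<le> alpha j \<omega>})" by simp
  also have "\<dots> \<le> real (card (rej_set E P alpha \<tau> \<omega>))"
  proof -
    have "{j\<in>noncf E L \<tau>. P j \<omega> \<le> alpha j \<omega>} \<subseteq> rej_set E P alpha \<tau> \<omega>"
      by (auto simp: noncf_iff rej_set_def)
    moreover have "finite (rej_set E P alpha \<tau> \<omega>)"
      by (rule finite_subset[of _ "{1..\<tau>}"]) (auto simp: rej_set_def)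
    ultimately show ?thesis by (simp add: card_mono)
  qed
  finally show ?thesis .
qed

lemma sumR_le_t:
  assumes "1 \<le> t"
  shows "max (\<Sum>j\<in>noncf E L t. R_ind P alpha j \<omega>) 1 \<le> real t"
proof -
  have "(\<Sum>j\<in>noncf E L t. R_ind P alpha j \<omega>) \<le> real (card (noncf E L t)) * 1"
    by (rule sum_bounded_above) (simp add: R_ind_def)
  also have "card (noncf E L t) \<le> card {1..<t}" by (rule card_mono[OF _ noncf_sub]) simp
  then have "real (card (noncf E L t)) * 1 \<le> real t" by simp
  finally show ?thesis using assms by simp
qed

lemma basic_step:
  fixes g :: "'a \<Rightarrow> real"
  assumes M: "prob_space M" and sub: "subalgebra M F" and Pm: "Pt \<in> borel_measurable M"
    and hyp: "AE \<omega> in M. real_cond_exp M F (indicator {\<omega>\<in>space M. Pt \<omega> \<le> v}) \<omega> \<le> v"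
    and gm: "g \<in> borel_measurable F" and gb: "\<And>\<omega>. \<omega> \<in> space M \<Longrightarrow> 0 \<le> g \<omega> \<and> g \<omega> \<le> C"
  shows "(\<integral>\<omega>. g \<omega> * indicator {\<omega>\<in>space M. Pt \<omega> \<le> v} \<omega> \<partial>M) \<le> (\<integral>\<omega>. g \<omega> * v \<partial>M)"
proof -
  interpret prob_space M by fact
  interpret fs: finite_measure_subalgebra M F
    by (simp add: finite_measure_subalgebra_def finite_measure_subalgebra_axioms_def sub finite_measure_axioms)
  have C0: "0 \<le> C"
  proof -
    obtain \<omega> where "\<omega> \<in> space M" using not_empty by blast
    then show ?thesis using gb by (meson order_trans)
  qed
  have gM[measurable]: "g \<in> borel_measurable M" using measurable_from_subalg[OF sub gm] .
  have Pm'[measurable]: "Pt \<in> borel_measurable M" by fact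
  have indm[measurable]: "indicator {\<omega>\<in>space M. Pt \<omega> \<le> v} \<in> borel_measurable M"
    by measurable
  have int1: "integrable M (\<lambda>\<omega>. g \<omega> * indicator {\<omega>\<in>space M. Pt \<omega> \<le> v} \<omega>)"
    by (rule integrable_const_bound[where B=C]) (use gb C0 in \<open>auto simp: indicator_def\<close>)
  have "(\<integral>\<omega>. g \<omega> * indicator {\<omega>\<in>space M. Pt \<omega> \<le> v} \<omega> \<partial>M)
      = (\<integral>\<omega>. g \<omega> * real_cond_exp M F (indicator {\<omega>\<in>space M. Pt \<omega> \<le> v}) \<omega> \<partial>M)"
    using fs.real_cond_exp_intg(2)[OF int1 gm indm] by simp
  also have "\<dots> \<le> (\<integral>\<omega>. g \<omega> * v \<partial>M)"
  proof (rule integral_mono_AE)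
    show "integrable M (\<lambda>\<omega>. g \<omega> * real_cond_exp M F (indicator {\<omega>\<in>space M. Pt \<omega> \<le> v}) \<omega>)"
      using fs.real_cond_exp_intg(1)[OF int1 gm indm] .
    show "integrable M (\<lambda>\<omega>. g \<omega> * v)"
      by (rule integrable_const_bound[where B="C * \<bar>v\<bar>"]) (use gb in \<open>auto simp: abs_mult intro!: mult_right_mono\<close>)
    show "AE \<omega> in M. g \<omega> * real_cond_exp M F (indicator {\<omega>\<in>space M. Pt \<omega> \<le> v}) \<omega> \<le> g \<omega> * v"
      using hyp AE_space by eventually_elim (use gb in \<open>auto intro: mult_left_mono\<close>)
  qed
  finally show ?thesis .
qed

lemma key_ineq:
  fixes g u :: "'a \<Rightarrow> real"
  assumes M: "prob_space M" and sub: "subalgebra M F" and Pm: "Pt \<in> borel_measurable M"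
    and hyp: "\<And>v. 0 \<le> v \<Longrightarrow> v \<le> 1 \<Longrightarrow>
       AE \<omega> in M. real_cond_exp M F (indicator {\<omega>\<in>space M. Pt \<omega> \<le> v}) \<omega> \<le> v"
    and gm: "g \<in> borel_measurable F" and gb: "\<And>\<omega>. \<omega> \<in> space M \<Longrightarrow> 0 \<le> g \<omega> \<and> g \<omega> \<le> C"
    and um: "u \<in> borel_measurable F" and ub: "\<And>\<omega>. \<omega> \<in> space M \<Longrightarrow> 0 \<le> u \<omega> \<and> u \<omega> \<le> D"
  shows "(\<integral>\<omega>. g \<omega> * (if Pt \<omega> \<le> u \<omega> then 1 else 0) \<partial>M) \<le> (\<integral>\<omega>. g \<omega> * u \<omega> \<partial>M)"
proof -
  interpret prob_space M by fact
  obtain \<omega>0 where \<omega>0: "\<omega>0 \<in> space M" using not_empty by blast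
  have C0: "0 \<le> C" using gb[OF \<omega>0] by linarith
  have D0: "0 \<le> D" using ub[OF \<omega>0] by linarith
  have gM[measurable]: "g \<in> borel_measurable M" using measurable_from_subalg[OF sub gm] .
  have uM[measurable]: "u \<in> borel_measurable M" using measurable_from_subalg[OF sub um] .
  have gF[measurable]: "g \<in> borel_measurable F" by fact
  have uF[measurable]: "u \<in> borel_measurable F" by fact
  have Pm'[measurable]: "Pt \<in> borel_measurable M" by fact
  have natm[measurable]: "(nat :: int \<Rightarrow> nat) \<in> measurable (count_space UNIV) (count_space UNIV)" by simp
  have intgu: "integrable M (\<lambda>\<omega>. g \<omega> * u \<omega>)"
    by (rule integrable_const_bound[where B="C * D"])
       (use gb ub C0 D0 in \<open>auto simp: abs_mult intro!: mult_mono\<close>)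
  have step: "(\<integral>\<omega>. g \<omega> * (if Pt \<omega> \<le> u \<omega> then 1 else 0) \<partial>M) \<le> (\<integral>\<omega>. g \<omega> * u \<omega> \<partial>M) + C / real n"
    if n: "n \<ge> 1" for n :: nat
  proof -
    define c where "c \<omega> = nat \<lceil>real n * u \<omega>\<rceil>" for \<omega>
    define h where "h j \<omega> = g \<omega> * (if u \<omega> \<le> 1 \<and> c \<omega> = j then 1 else 0)" for j \<omega>
    define hi where "hi \<omega> = g \<omega> * (if u \<omega> > 1 then 1 else 0)" for \<omega>
    have hm[measurable]: "h j \<in> borel_measurable F" for j unfolding h_def c_def by measurable
    have hiM[measurable]: "hi \<in> borel_measurable M" unfolding hi_def by measurable
    have hb: "0 \<le> h j \<omega> \<and> h j \<omega> \<le> C" if "\<omega> \<in> space M" for j \<omega>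
      using gb[OF that] unfolding h_def by auto
    have hib: "0 \<le> hi \<omega> \<and> hi \<omega> \<le> C" if "\<omega> \<in> space M" for \<omega>
      using gb[OF that] unfolding hi_def by auto
    have npos: "real n > 0" using n by simp
    have cle: "c \<omega> \<le> n" and ucn: "u \<omega> \<le> real (c \<omega>) / real n"
      and cnu: "real (c \<omega>) / real n \<le> u \<omega> + 1 / real n"
      if "\<omega> \<in> space M" "u \<omega> \<le> 1" for \<omega>
    proof -
      have u0: "0 \<le> u \<omega>" using ub[OF that(1)] by simp
      have nu: "real n * u \<omega> \<le> real n" using mult_left_mono[OF that(2), of "real n"] by simp
      have nu0: "0 \<le> real n * u \<omega>" using u0 by simp
      have cc: "real (c \<omega>) = real_of_int \<lceil>real n * u \<omega>\<rceil>"
        unfolding c_def using nu0 by simp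
      have "\<lceil>real n * u \<omega>\<rceil> \<le> int n" using nu by (simp add: ceiling_le_iff)
      then show "c \<omega> \<le> n" unfolding c_def by (subst nat_le_iff) assumption
      have "real n * u \<omega> \<le> real (c \<omega>)" using cc by linarith
      then show "u \<omega> \<le> real (c \<omega>) / real n" using npos by (simp add: field_simps)
      have "real (c \<omega>) \<le> real n * u \<omega> + 1" using cc by linarith
      then show "real (c \<omega>) / real n \<le> u \<omega> + 1 / real n" using npos by (simp add: field_simps)
    qed
    define I where "I j = (indicator {\<omega>\<in>space M. Pt \<omega> \<le> real j / real n} :: 'a \<Rightarrow> real)" for j
    have Im[measurable]: "I j \<in> borel_measurable M" for j unfolding I_def by measurable
    have pw1: "g \<omega> * (if Pt \<omega> \<le> u \<omega> then 1 else 0) \<le> hi \<omega> + (\<Sum>j\<le>n. h j \<omega> * I j \<omega>)"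
      if \<omega>: "\<omega> \<in> space M" for \<omega>
    proof -
      have s0: "0 \<le> (\<Sum>j\<le>n. h j \<omega> * I j \<omega>)"
        by (rule sum_nonneg) (use hb[OF \<omega>] in \<open>auto simp: I_def\<close>)
      show ?thesis
      proof (cases "u \<omega> > 1")
        case True
        then show ?thesis using s0 gb[OF \<omega>] unfolding hi_def by auto
      next
        case False
        then have u1: "u \<omega> \<le> 1" by simp
        show ?thesis
        proof (cases "Pt \<omega> \<le> u \<omega>")
          case True
          then have "Pt \<omega> \<le> real (c \<omega>) / real n" using ucn[OF \<omega> u1] by linarith
          then have "h (c \<omega>) \<omega> * I (c \<omega>) \<omega> = g \<omega>" unfolding h_def I_def using u1 \<omega> by simp
          moreover have "h (c \<omega>) \<omega> * I (c \<omega>) \<omega> \<le> (\<Sum>j\<le>n. h j \<omega> * I j \<omega>)"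
            by (rule member_le_sum) (use hb[OF \<omega>] cle[OF \<omega> u1] in \<open>auto simp: I_def\<close>)
          ultimately show ?thesis using True False unfolding hi_def by simp
        next
          case False
          then show ?thesis using s0 hib[OF \<omega>] by simp
        qed
      qed
    qed
    have pw2: "hi \<omega> + (\<Sum>j\<le>n. h j \<omega> * (real j / real n)) \<le> g \<omega> * u \<omega> + C / real n"
      if \<omega>: "\<omega> \<in> space M" for \<omega>
    proof (cases "u \<omega> > 1")
      case True
      then have "h j \<omega> = 0" for j unfolding h_def by simp
      then have "hi \<omega> + (\<Sum>j\<le>n. h j \<omega> * (real j / real n)) = g \<omega>" unfolding hi_def using True by simp
      also have "\<dots> \<le> g \<omega> * u \<omega>" using True gb[OF \<omega>] by (simp add: mult_le_cancel_left1)
      also have "\<dots> \<le> g \<omega> * u \<omega> + C / real n" using C0 npos by simp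
      finally show ?thesis .
    next
      case False
      then have u1: "u \<omega> \<le> 1" by simp
      have "(\<Sum>j\<le>n. h j \<omega> * (real j / real n)) = (\<Sum>j\<le>n. if j = c \<omega> then g \<omega> * (real j / real n) else 0)"
        by (rule sum.cong) (auto simp: h_def u1)
      also have "\<dots> = g \<omega> * (real (c \<omega>) / real n)" using cle[OF \<omega> u1] by simp
      also have "\<dots> \<le> g \<omega> * (u \<omega> + 1 / real n)"
        using cnu[OF \<omega> u1] gb[OF \<omega>] by (intro mult_left_mono) auto
      also have "\<dots> \<le> g \<omega> * u \<omega> + C / real n"
        using gb[OF \<omega>] npos by (simp add: distrib_left divide_right_mono)
      finally show ?thesis using False unfolding hi_def by simp
    qed
    have hmM[measurable]: "h j \<in> borel_measurable M" for j using measurable_from_subalg[OF sub hm] .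
    have inth: "integrable M (\<lambda>\<omega>. h j \<omega> * I j \<omega>)" for j
    proof -
      have "(\<lambda>\<omega>. h j \<omega> * I j \<omega>) \<in> borel_measurable M" by measurable
      then show ?thesis
        by (rule integrable_const_bound[where B=C, rotated]) (use hb C0 in \<open>auto simp: I_def indicator_def\<close>)
    qed
    have inth2: "integrable M (\<lambda>\<omega>. h j \<omega> * (real j / real n))" for j
      by (rule integrable_mult_left) (rule integrable_const_bound[where B=C], use hb C0 in auto)
    have inthi: "integrable M hi"
      by (rule integrable_const_bound[where B=C]) (use hib C0 in auto)
    have "(\<integral>\<omega>. g \<omega> * (if Pt \<omega> \<le> u \<omega> then 1 else 0) \<partial>M) \<le> (\<integral>\<omega>. hi \<omega> + (\<Sum>j\<le>n. h j \<omega> * I j \<omega>) \<partial>M)"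
    proof (rule integral_mono_AE')
      show "integrable M (\<lambda>\<omega>. hi \<omega> + (\<Sum>j\<le>n. h j \<omega> * I j \<omega>))"
        using inthi inth by auto
      show "AE \<omega> in M. g \<omega> * (if Pt \<omega> \<le> u \<omega> then 1 else 0) \<le> hi \<omega> + (\<Sum>j\<le>n. h j \<omega> * I j \<omega>)"
        using pw1 by (auto intro: AE_I2)
      show "AE \<omega> in M. 0 \<le> hi \<omega> + (\<Sum>j\<le>n. h j \<omega> * I j \<omega>)"
        using hib hb by (auto intro!: AE_I2 add_nonneg_nonneg sum_nonneg simp: I_def)
    qed
    also have "\<dots> = (\<integral>\<omega>. hi \<omega> \<partial>M) + (\<Sum>j\<le>n. (\<integral>\<omega>. h j \<omega> * I j \<omega> \<partial>M))"
      using inthi inth by (simp add: Bochner_Integration.integral_add Bochner_Integration.integral_sum)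
    also have "\<dots> \<le> (\<integral>\<omega>. hi \<omega> \<partial>M) + (\<Sum>j\<le>n. (\<integral>\<omega>. h j \<omega> * (real j / real n) \<partial>M))"
    proof -
      have "(\<integral>\<omega>. h j \<omega> * I j \<omega> \<partial>M) \<le> (\<integral>\<omega>. h j \<omega> * (real j / real n) \<partial>M)" if "j \<le> n" for j
        unfolding I_def
      proof (rule basic_step[OF M sub Pm _ hm])
        show "AE \<omega> in M. real_cond_exp M F (indicat_real {\<omega> \<in> space M. Pt \<omega> \<le> real j / real n}) \<omega> \<le> real j / real n"
          using that npos by (intro hyp) auto
        show "\<And>\<omega>. \<omega> \<in> space M \<Longrightarrow> 0 \<le> h j \<omega> \<and> h j \<omega> \<le> C" using hb by blast
      qed
      then show ?thesis by (intro add_left_mono sum_mono) auto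
    qed
    also have "\<dots> = (\<integral>\<omega>. hi \<omega> + (\<Sum>j\<le>n. h j \<omega> * (real j / real n)) \<partial>M)"
      using inthi inth2 by (simp add: Bochner_Integration.integral_add Bochner_Integration.integral_sum)
    also have "\<dots> \<le> (\<integral>\<omega>. g \<omega> * u \<omega> + C / real n \<partial>M)"
    proof (rule integral_mono)
      show "integrable M (\<lambda>\<omega>. hi \<omega> + (\<Sum>j\<le>n. h j \<omega> * (real j / real n)))" using inthi inth2 by auto
      show "integrable M (\<lambda>\<omega>. g \<omega> * u \<omega> + C / real n)" using intgu by auto
      show "\<And>\<omega>. \<omega> \<in> space M \<Longrightarrow> hi \<omega> + (\<Sum>j\<le>n. h j \<omega> * (real j / real n)) \<le> g \<omega> * u \<omega> + C / real n"
        using pw2 by blast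
    qed
    also have "\<dots> = (\<integral>\<omega>. g \<omega> * u \<omega> \<partial>M) + C / real n"
      using intgu by (simp add: Bochner_Integration.integral_add prob_space)
    finally show ?thesis .
  qed
  show ?thesis
  proof (rule field_le_epsilon)
    fix e :: real assume e: "0 < e"
    obtain n :: nat where nn: "C / e < real n" using reals_Archimedean2 by blast
    have "0 \<le> C / e" using C0 e by simp
    then have n1: "n \<ge> 1" using nn by (cases n) auto
    have "C / real n \<le> e" using nn e n1 by (simp add: field_simps)
    then show "(\<integral>\<omega>. g \<omega> * (if Pt \<omega> \<le> u \<omega> then 1 else 0) \<partial>M) \<le> (\<integral>\<omega>. g \<omega> * u \<omega> \<partial>M) + e"
      using step[OF n1] by linarith
  qed
qed

theorem theorem2:
  fixes M :: "'a measure" and H0 :: "nat set"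
    and E L :: "nat \<Rightarrow> nat" and lvl :: real
    and P alpha lam :: "nat \<Rightarrow> 'a \<Rightarrow> real"
    and T :: "'a \<Rightarrow> nat" and k :: proc_kind
  assumes prob: "prob_space M"
    and P_meas: "\<And>t. t \<ge> 1 \<Longrightarrow> P t \<in> borel_measurable M"
    and E_ge: "\<And>t. t \<ge> 1 \<Longrightarrow> E t \<ge> t"
    and L_lag: "\<And>t. t \<ge> 1 \<Longrightarrow> L (Suc t) \<le> L t + 1"
    and proc: "(k = LORD_star \<and> is_LORD_star M E L lvl P alpha)
             \<or> (k = SAFFRON_star \<and> is_SAFFRON_star M E L lvl P alpha lam)"
    and superunif: "\<And>t u. t \<in> H0 \<Longrightarrow> t \<ge> 1 \<Longrightarrow> 0 \<le> u \<Longrightarrow> u \<le> 1 \<Longrightarrow>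
           AE \<omega> in M. real_cond_exp M (noncf_sigma k M E L P alpha lam (E t))
                          (indicator {\<omega>\<in>space M. P t \<omega> \<le> u}) \<omega> \<le> u"
    and T_pos: "\<And>\<omega>. \<omega> \<in> space M \<Longrightarrow> T \<omega> \<ge> 1"
    and C1: "\<And>t. t \<ge> 1 \<Longrightarrow>
           {\<omega>\<in>space M. T \<omega> = t} \<in> sets (noncf_sigma k M E L P alpha lam (t + 1))"
    and C2: "\<exists>B. AE \<omega> in M. T \<omega> \<le> B"
  shows "mFDR M H0 E P alpha T \<le> lvl"
proof -
  interpret prob_space M by (rule prob)
  obtain \<omega>0 where \<omega>0: "\<omega>0 \<in> space M" using not_empty by blast
  define F where "F t = noncf_sigma k M E L P alpha lam t" for t
  have Fmono: "subalgebra (F t) (F s)" if "s \<le> t" for s t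
    unfolding F_def by (rule noncf_sigma_mono[of L, OF L_lag that])
  have am: "alpha t \<in> borel_measurable (F t)" if "t \<ge> 1" for t
  proof (cases k)
    case LORD_star
    with proc have "is_LORD_star M E L lvl P alpha" by auto
    then show ?thesis using that LORD_star unfolding F_def is_LORD_star_def
      using noncf_sigma_LORD_lam by metis
  next
    case SAFFRON_star
    with proc have "is_SAFFRON_star M E L lvl P alpha lam" by auto
    then show ?thesis using that SAFFRON_star unfolding F_def is_SAFFRON_star_def by auto
  qed
  have lm: "lam t \<in> borel_measurable (F t)" if "t \<ge> 1" "k = SAFFRON_star" for t
  proof -
    from proc that have "is_SAFFRON_star M E L lvl P alpha lam" by auto
    then show ?thesis using that unfolding F_def is_SAFFRON_star_def by auto
  qed
  have meas: "subalgebra M (F t) \<and> (1 \<le> t \<longrightarrow> alpha t \<in> borel_measurable M \<and>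
      (k = SAFFRON_star \<longrightarrow> lam t \<in> borel_measurable M))" for t
  proof (induction t rule: less_induct)
    case (less t)
    have sub: "subalgebra M (F t)" unfolding F_def
    proof (rule noncf_sigma_sub)
      fix i assume i: "i \<in> noncf E L t"
      then have it: "i < t" "1 \<le> i" by (auto simp: noncf_iff)
      then show "R_ind P alpha i \<in> borel_measurable M"
        using less[OF it(1)] P_meas[OF it(2)] by (auto intro: R_ind_meas)
      show "C_ind P lam i \<in> borel_measurable M" if "k = SAFFRON_star"
        using less[OF it(1)] P_meas[OF it(2)] it that by (auto intro: C_ind_meas)
    qed
    show ?case using sub measurable_from_subalg[OF sub am] measurable_from_subalg[OF sub lm] by auto
  qed
  have subM: "subalgebra M (F t)" for t using meas by blast
  have alphaM: "alpha t \<in> borel_measurable M" if "t \<ge> 1" for t using meas that by blast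
  have lamM: "lam t \<in> borel_measurable M" if "t \<ge> 1" "k = SAFFRON_star" for t using meas that by blast
  have LORD_facts: "\<And>t \<omega>. t \<ge> 1 \<Longrightarrow> \<omega> \<in> space M \<Longrightarrow> 0 \<le> alpha t \<omega> \<and>
        (\<Sum>j\<in>{1..t}. alpha j \<omega>) \<le> lvl * max (\<Sum>j\<in>noncf E L t. R_ind P alpha j \<omega>) 1"
    if "k = LORD_star"
    using proc that unfolding is_LORD_star_def by auto
  have SAFF_facts: "\<And>t \<omega>. t \<ge> 1 \<Longrightarrow> \<omega> \<in> space M \<Longrightarrow>
        0 \<le> alpha t \<omega> \<and> alpha t \<omega> \<le> lam t \<omega> \<and> lam t \<omega> < 1 \<and>
        (\<Sum>j\<in>noncf E L t. alpha j \<omega> / (1 - lam j \<omega>) * (if P j \<omega> > lam j \<omega> then 1 else 0))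
        + (\<Sum>j\<in>conflict_set E L t \<union> {t}. alpha j \<omega> / (1 - lam j \<omega>))
        \<le> lvl * max (\<Sum>j\<in>noncf E L t. R_ind P alpha j \<omega>) 1"
    if "k = SAFFRON_star"
    using proc that unfolding is_SAFFRON_star_def by auto
  have alpha_nn: "0 \<le> alpha t \<omega>" if "t \<ge> 1" "\<omega> \<in> space M" for t \<omega>
    using LORD_facts SAFF_facts that by (cases k) auto
  have g_nn: "0 \<le> alpha t \<omega> / (1 - lam t \<omega>)" if "t \<ge> 1" "\<omega> \<in> space M" "k = SAFFRON_star" for t \<omega>
    using SAFF_facts[OF that(3,1,2)] by simp
  have noncf_ge1: "j \<ge> 1" if "j \<in> noncf E L t" for j t using that by (simp add: noncf_iff)
  have conf_ge1: "j \<ge> 1" if "j \<in> conflict_set E L t" for j t using that conflict_sub by fastforce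
  have SAFF_nn1: "0 \<le> (\<Sum>j\<in>noncf E L t. alpha j \<omega> / (1 - lam j \<omega>) * (if P j \<omega> > lam j \<omega> then 1 else 0))"
    if "\<omega> \<in> space M" "k = SAFFRON_star" for t \<omega>
    by (rule sum_nonneg) (use g_nn noncf_ge1 that in auto)
  have SAFF_nn2: "0 \<le> (\<Sum>j\<in>conflict_set E L t \<union> {t}. alpha j \<omega> / (1 - lam j \<omega>))"
    if "t \<ge> 1" "\<omega> \<in> space M" "k = SAFFRON_star" for t \<omega>
    by (rule sum_nonneg) (use g_nn conf_ge1 that in auto)
  have lvl0: "0 \<le> lvl"
  proof -
    have m: "0 < max (\<Sum>j\<in>noncf E L 1. R_ind P alpha j \<omega>0) 1" by simp
    have "0 \<le> lvl * max (\<Sum>j\<in>noncf E L 1. R_ind P alpha j \<omega>0) 1"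
    proof (cases k)
      case LORD_star
      then show ?thesis using LORD_facts[OF LORD_star, of 1 \<omega>0] \<omega>0 by simp
    next
      case SAFFRON_star
      then show ?thesis using SAFF_facts[OF SAFFRON_star, of 1 \<omega>0] \<omega>0
          SAFF_nn1[OF \<omega>0 SAFFRON_star, of 1] SAFF_nn2[of 1, OF _ \<omega>0 SAFFRON_star] by linarith
    qed
    then show ?thesis using m by (metis not_le mult_neg_pos)
  qed
  have lvl_t: "lvl * max (\<Sum>j\<in>noncf E L t. R_ind P alpha j \<omega>) 1 \<le> lvl * real t" if "t \<ge> 1" for t \<omega>
    by (rule mult_left_mono[OF sumR_le_t[OF that] lvl0])
  have lvl_card: "lvl * max (\<Sum>j\<in>noncf E L t. R_ind P alpha j \<omega>) 1
      \<le> lvl * max (real (card (rej_set E P alpha t \<omega>))) 1" for t \<omega>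
    by (rule mult_left_mono[OF _ lvl0]) (rule max.mono[OF sumR_le_card order_refl])
  have alpha_le: "alpha t \<omega> \<le> lvl * real t" if "t \<ge> 1" "\<omega> \<in> space M" "k = LORD_star" for t \<omega>
  proof -
    have "alpha t \<omega> \<le> (\<Sum>j\<in>{1..t}. alpha j \<omega>)"
      by (rule member_le_sum) (use that alpha_nn in auto)
    also have "\<dots> \<le> lvl * real t" using LORD_facts[OF that(3) that(1,2)] lvl_t[OF that(1), of \<omega>] by linarith
    finally show ?thesis .
  qed
  have g_le: "alpha t \<omega> / (1 - lam t \<omega>) \<le> lvl * real t" if "t \<ge> 1" "\<omega> \<in> space M" "k = SAFFRON_star" for t \<omega>
  proof -
    have "alpha t \<omega> / (1 - lam t \<omega>) \<le> (\<Sum>j\<in>conflict_set E L t \<union> {t}. alpha j \<omega> / (1 - lam j \<omega>))"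
      by (rule member_le_sum) (use that g_nn conf_ge1 finite_conflict in auto)
    also have "\<dots> \<le> lvl * real t" using SAFF_facts[OF that(3) that(1,2)] lvl_t[OF that(1), of \<omega>]
        SAFF_nn1[OF that(2,3), of t] by linarith
    finally show ?thesis .
  qed
  define A where "A t = {\<omega>\<in>space M. E t \<le> T \<omega>}" for t
  have spaceF: "space (F t) = space M" for t using subM[of t] by (simp add: subalgebra_def)
  have A_F: "A t \<in> sets (F (E t))" if t1: "t \<ge> 1" for t
  proof -
    have eq: "A t = space M - (\<Union>s\<in>{1..<E t}. {\<omega>\<in>space M. T \<omega> = s})"
      using T_pos by (force simp: A_def)
    have "{\<omega>\<in>space M. T \<omega> = s} \<in> sets (F (E t))" if "s \<in> {1..<E t}" for s
      using C1[of s] Fmono[of "s+1" "E t"] that unfolding F_def subalgebra_def by auto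
    then have "(\<Union>s\<in>{1..<E t}. {\<omega>\<in>space M. T \<omega> = s}) \<in> sets (F (E t))" by blast
    moreover have "space M \<in> sets (F (E t))" using sets.top[of "F (E t)"] spaceF by simp
    ultimately show ?thesis unfolding eq by blast
  qed
  have A_M: "A t \<in> sets M" if "t \<ge> 1" for t using A_F[OF that] subM[of "E t"] by (auto simp: subalgebra_def)
  have ind_le: "\<And>\<omega>. 0 \<le> (indicator (A t) \<omega> :: real) \<and> indicator (A t) \<omega> \<le> (1::real)" for t
    by (auto simp: indicator_def)
  have term_LORD: "(\<integral>\<omega>. indicator (A t) \<omega> * R_ind P alpha t \<omega> \<partial>M) \<le> (\<integral>\<omega>. indicator (A t) \<omega> * alpha t \<omega> \<partial>M)"
    if tH: "t \<in> H0" and t1: "t \<ge> 1" and kL: "k = LORD_star" for t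
  proof -
    have aF: "alpha t \<in> borel_measurable (F (E t))"
      using measurable_from_subalg[OF Fmono[OF E_ge[OF t1]] am[OF t1]] .
    show ?thesis unfolding R_ind_def
    proof (rule key_ineq[OF prob subM[of "E t"] P_meas[OF t1]])
      show "\<And>v. 0 \<le> v \<Longrightarrow> v \<le> 1 \<Longrightarrow> AE \<omega> in M. real_cond_exp M (F (E t)) (indicat_real {\<omega> \<in> space M. P t \<omega> \<le> v}) \<omega> \<le> v"
        unfolding F_def using superunif[OF tH t1] by blast
      show "indicator (A t) \<in> borel_measurable (F (E t))" by (rule borel_measurable_indicator[OF A_F[OF t1]])
      show "\<And>\<omega>. \<omega> \<in> space M \<Longrightarrow> 0 \<le> (indicator (A t) \<omega> :: real) \<and> indicator (A t) \<omega> \<le> (1::real)" using ind_le by blast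
      show "alpha t \<in> borel_measurable (F (E t))" by (rule aF)
      show "\<And>\<omega>. \<omega> \<in> space M \<Longrightarrow> 0 \<le> alpha t \<omega> \<and> alpha t \<omega> \<le> lvl * real t"
        using alpha_nn alpha_le t1 kL by blast
    qed
  qed
  have term_SAFF: "(\<integral>\<omega>. indicator (A t) \<omega> * R_ind P alpha t \<omega> \<partial>M)
      \<le> (\<integral>\<omega>. indicator (A t) \<omega> * (alpha t \<omega> / (1 - lam t \<omega>)) * (if P t \<omega> > lam t \<omega> then 1 else 0) \<partial>M)"
    if tH: "t \<in> H0" and t1: "t \<ge> 1" and kS: "k = SAFFRON_star" for t
  proof -
    have aF[measurable]: "alpha t \<in> borel_measurable (F (E t))"
      using measurable_from_subalg[OF Fmono[OF E_ge[OF t1]] am[OF t1]] .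
    have lF[measurable]: "lam t \<in> borel_measurable (F (E t))"
      using measurable_from_subalg[OF Fmono[OF E_ge[OF t1]] lm[OF t1 kS]] .
    have AF[measurable]: "A t \<in> sets (F (E t))" using A_F[OF t1] .
    have aM[measurable]: "alpha t \<in> borel_measurable M" using alphaM[OF t1] .
    have lM[measurable]: "lam t \<in> borel_measurable M" using lamM[OF t1 kS] .
    have AM[measurable]: "A t \<in> sets M" using A_M[OF t1] .
    have PM[measurable]: "P t \<in> borel_measurable M" using P_meas[OF t1] .
    have hyp: "\<And>v. 0 \<le> v \<Longrightarrow> v \<le> 1 \<Longrightarrow> AE \<omega> in M. real_cond_exp M (F (E t)) (indicat_real {\<omega> \<in> space M. P t \<omega> \<le> v}) \<omega> \<le> v"
      unfolding F_def using superunif[OF tH t1] by blast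
    have sf: "0 \<le> alpha t \<omega> \<and> alpha t \<omega> \<le> lam t \<omega> \<and> lam t \<omega> < 1" if "\<omega> \<in> space M" for \<omega>
      using SAFF_facts[OF kS t1 that] by blast
    define h where "h \<omega> = indicator (A t) \<omega> * (alpha t \<omega> / (1 - lam t \<omega>))" for \<omega>
    have hF: "h \<in> borel_measurable (F (E t))" unfolding h_def by measurable
    have hM[measurable]: "h \<in> borel_measurable M" unfolding h_def by measurable
    have hb: "0 \<le> h \<omega> \<and> h \<omega> \<le> lvl * real t" if "\<omega> \<in> space M" for \<omega>
      using g_nn[OF t1 that kS] g_le[OF t1 that kS] lvl0 unfolding h_def
      by (auto simp: indicator_def)
    have lb: "0 \<le> lam t \<omega> \<and> lam t \<omega> \<le> 1" if "\<omega> \<in> space M" for \<omega> using sf[OF that] by auto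
    have step1: "(\<integral>\<omega>. indicator (A t) \<omega> * R_ind P alpha t \<omega> \<partial>M) \<le> (\<integral>\<omega>. indicator (A t) \<omega> * alpha t \<omega> \<partial>M)"
      unfolding R_ind_def
    proof (rule key_ineq[OF prob subM[of "E t"] P_meas[OF t1] hyp])
      show "indicator (A t) \<in> borel_measurable (F (E t))" by (rule borel_measurable_indicator[OF A_F[OF t1]])
      show "\<And>\<omega>. \<omega> \<in> space M \<Longrightarrow> 0 \<le> (indicator (A t) \<omega> :: real) \<and> indicator (A t) \<omega> \<le> (1::real)" using ind_le by blast
      show "alpha t \<in> borel_measurable (F (E t))" by (rule aF)
      show "\<And>\<omega>. \<omega> \<in> space M \<Longrightarrow> 0 \<le> alpha t \<omega> \<and> alpha t \<omega> \<le> 1"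
        using sf by fastforce
    qed (auto)
    have step2: "(\<integral>\<omega>. h \<omega> * (if P t \<omega> \<le> lam t \<omega> then 1 else 0) \<partial>M) \<le> (\<integral>\<omega>. h \<omega> * lam t \<omega> \<partial>M)"
      by (rule key_ineq[OF prob subM[of "E t"] P_meas[OF t1] hyp hF hb lF lb]) auto
    have inth: "integrable M h"
      by (rule integrable_const_bound[where B="lvl * real t"]) (use hb lvl0 in auto)
    have inthl: "integrable M (\<lambda>\<omega>. h \<omega> * lam t \<omega>)"
      by (rule integrable_const_bound[where B="lvl * real t"]) (use hb lb lvl0 in \<open>auto simp: abs_mult intro: mult_le_one order_trans[OF mult_right_le_one_le]\<close>)
    have inthi: "integrable M (\<lambda>\<omega>. h \<omega> * (if P t \<omega> \<le> lam t \<omega> then 1 else 0))"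
      by (rule integrable_const_bound[where B="lvl * real t"]) (use hb lvl0 in auto)
    have eq1: "(\<integral>\<omega>. indicator (A t) \<omega> * alpha t \<omega> \<partial>M) = (\<integral>\<omega>. h \<omega> - h \<omega> * lam t \<omega> \<partial>M)"
    proof (rule Bochner_Integration.integral_cong[OF refl])
      fix \<omega> assume "\<omega> \<in> space M"
      then have ne: "1 - lam t \<omega> \<noteq> 0" using sf by fastforce
      have "h \<omega> - h \<omega> * lam t \<omega> = h \<omega> * (1 - lam t \<omega>)" by (simp add: algebra_simps)
      also have "\<dots> = indicator (A t) \<omega> * alpha t \<omega>" unfolding h_def using ne by simp
      finally show "indicator (A t) \<omega> * alpha t \<omega> = h \<omega> - h \<omega> * lam t \<omega>" by simp
    qed
    have eq2: "(\<integral>\<omega>. indicator (A t) \<omega> * (alpha t \<omega> / (1 - lam t \<omega>)) * (if P t \<omega> > lam t \<omega> then 1 else 0) \<partial>M)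
        = (\<integral>\<omega>. h \<omega> - h \<omega> * (if P t \<omega> \<le> lam t \<omega> then 1 else 0) \<partial>M)"
      by (rule Bochner_Integration.integral_cong[OF refl]) (auto simp: h_def)
    show ?thesis
      using step1 step2 eq1 eq2 inth inthl inthi by simp
  qed
  obtain B where B: "AE \<omega> in M. T \<omega> \<le> B" using C2 by blast
  define S where "S = {t \<in> H0. 1 \<le> t \<and> t \<le> B}"
  have finS: "finite S" unfolding S_def by (rule finite_subset[of _ "{1..B}"]) auto
  have S1: "t \<in> H0" "t \<ge> 1" "t \<le> B" if "t \<in> S" for t using that by (auto simp: S_def)
  define Q where "Q t \<omega> = (if k = LORD_star then indicator (A t) \<omega> * alpha t \<omega>
      else indicator (A t) \<omega> * (alpha t \<omega> / (1 - lam t \<omega>)) * (if P t \<omega> > lam t \<omega> then 1 else 0))" for t \<omega>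
  have Qterm: "(\<integral>\<omega>. indicator (A t) \<omega> * R_ind P alpha t \<omega> \<partial>M) \<le> (\<integral>\<omega>. Q t \<omega> \<partial>M)" if "t \<in> S" for t
  proof (cases k)
    case LORD_star
    then show ?thesis using term_LORD[OF S1(1,2)[OF that] LORD_star] by (simp add: Q_def)
  next
    case SAFFRON_star
    then show ?thesis using term_SAFF[OF S1(1,2)[OF that] SAFFRON_star] by (simp add: Q_def)
  qed
  have Qint: "integrable M (Q t)" if "t \<in> S" for t
  proof -
    have t1: "t \<ge> 1" using S1[OF that] by simp
    have [measurable]: "A t \<in> sets M" "alpha t \<in> borel_measurable M" "P t \<in> borel_measurable M"
      using A_M[OF t1] alphaM[OF t1] P_meas[OF t1] by auto
    show ?thesis
    proof (cases k)
      case LORD_star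
      have m: "(\<lambda>\<omega>. indicator (A t) \<omega> * alpha t \<omega>) \<in> borel_measurable M" by measurable
      have "integrable M (\<lambda>\<omega>. indicator (A t) \<omega> * alpha t \<omega>)"
        by (rule integrable_const_bound[where B="lvl * real t", OF _ m])
           (use alpha_nn alpha_le[OF t1 _ LORD_star] t1 lvl0 in \<open>auto simp: indicator_def intro!: AE_I2\<close>)
      then show ?thesis using LORD_star by (simp add: Q_def[abs_def])
    next
      case SAFFRON_star
      have [measurable]: "lam t \<in> borel_measurable M" using lamM[OF t1 SAFFRON_star] .
      have m: "(\<lambda>\<omega>. indicator (A t) \<omega> * (alpha t \<omega> / (1 - lam t \<omega>)) * (if P t \<omega> > lam t \<omega> then 1 else 0)) \<in> borel_measurable M"
        by measurable
      have ab: "\<bar>alpha t x\<bar> / \<bar>1 - lam t x\<bar> \<le> lvl * real t" if "x \<in> space M" for x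
        using g_nn[OF t1 that SAFFRON_star] g_le[OF t1 that SAFFRON_star] by (metis abs_divide abs_of_nonneg)
      have "integrable M (\<lambda>\<omega>. indicator (A t) \<omega> * (alpha t \<omega> / (1 - lam t \<omega>)) * (if P t \<omega> > lam t \<omega> then 1 else 0))"
        by (rule integrable_const_bound[where B="lvl * real t", OF _ m])
           (use ab lvl0 in \<open>auto simp: indicator_def intro!: AE_I2\<close>)
      then show ?thesis using SAFFRON_star by (simp add: Q_def[abs_def])
    qed
  qed
  have indRint: "integrable M (\<lambda>\<omega>. indicator (A t) \<omega> * R_ind P alpha t \<omega>)" if "t \<in> S" for t
  proof -
    have t1: "t \<ge> 1" using S1[OF that] by simp
    have [measurable]: "A t \<in> sets M" "R_ind P alpha t \<in> borel_measurable M"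
      using A_M[OF t1] R_ind_meas[of P t M alpha, OF P_meas[OF t1] alphaM[OF t1]] by auto
    have m: "(\<lambda>\<omega>. indicator (A t) \<omega> * R_ind P alpha t \<omega>) \<in> borel_measurable M" by measurable
    show ?thesis
      by (rule integrable_const_bound[where B=1, OF _ m]) (auto simp: indicator_def R_ind_def)
  qed
  have Npw: "real (card (rej_set E P alpha (T \<omega>) \<omega> \<inter> H0)) \<le> (\<Sum>t\<in>S. indicator (A t) \<omega> * R_ind P alpha t \<omega>)"
    if \<omega>: "\<omega> \<in> space M" and TB: "T \<omega> \<le> B" for \<omega>
  proof -
    let ?Z = "{t\<in>S. E t \<le> T \<omega> \<and> P t \<omega> \<le> alpha t \<omega>}"
    have "rej_set E P alpha (T \<omega>) \<omega> \<inter> H0 \<subseteq> ?Z" using TB by (auto simp: rej_set_def S_def)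
    then have "card (rej_set E P alpha (T \<omega>) \<omega> \<inter> H0) \<le> card ?Z"
      by (rule card_mono[rotated]) (simp add: finS)
    then have "real (card (rej_set E P alpha (T \<omega>) \<omega> \<inter> H0)) \<le> real (card ?Z)" by simp
    also have "real (card ?Z) = (\<Sum>t\<in>?Z. 1)" by simp
    also have "\<dots> = (\<Sum>t\<in>S. if E t \<le> T \<omega> \<and> P t \<omega> \<le> alpha t \<omega> then 1 else 0)"
      by (rule sum.inter_filter[OF finS])
    also have "\<dots> = (\<Sum>t\<in>S. indicator (A t) \<omega> * R_ind P alpha t \<omega>)"
      by (rule sum.cong) (use \<omega> in \<open>auto simp: A_def R_ind_def indicator_def\<close>)
    finally show ?thesis .
  qed
  have Qpw: "(\<Sum>t\<in>S. Q t \<omega>) \<le> lvl * max (real (card (rej_set E P alpha (T \<omega>) \<omega>))) 1"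
    if \<omega>: "\<omega> \<in> space M" and TB: "T \<omega> \<le> B" for \<omega>
  proof -
    define \<tau> where "\<tau> = T \<omega>"
    have \<tau>1: "\<tau> \<ge> 1" using T_pos[OF \<omega>] by (simp add: \<tau>_def)
    define S' where "S' = {t\<in>S. E t \<le> \<tau>}"
    have finS': "finite S'" unfolding S'_def using finS by simp
    have S'sub: "S' \<subseteq> {1..\<tau>}"
    proof
      fix t assume "t \<in> S'"
      then have "t \<in> S" "E t \<le> \<tau>" by (auto simp: S'_def)
      then show "t \<in> {1..\<tau>}" using S1[of t] E_ge[of t] by auto
    qed
    have S'ge: "t \<ge> 1" if "t \<in> S'" for t using S'sub that by auto
    have sumQ: "(\<Sum>t\<in>S. Q t \<omega>) = (\<Sum>t\<in>S'. q t)" if qdef: "\<And>t. Q t \<omega> = indicator (A t) \<omega> * q t" for q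
    proof -
      have "(\<Sum>t\<in>S'. q t) = (\<Sum>t\<in>S. if E t \<le> \<tau> then q t else 0)"
        unfolding S'_def by (rule sum.inter_filter[OF finS])
      also have "\<dots> = (\<Sum>t\<in>S. Q t \<omega>)"
        by (rule sum.cong) (use \<omega> in \<open>auto simp: qdef A_def \<tau>_def indicator_def\<close>)
      finally show ?thesis by simp
    qed
    have main: "(\<Sum>t\<in>S. Q t \<omega>) \<le> lvl * max (\<Sum>j\<in>noncf E L \<tau>. R_ind P alpha j \<omega>) 1"
    proof (cases k)
      case LORD_star
      have "(\<Sum>t\<in>S. Q t \<omega>) = (\<Sum>t\<in>S'. alpha t \<omega>)"
        by (rule sumQ) (simp add: Q_def LORD_star)
      also have "\<dots> \<le> (\<Sum>t\<in>{1..\<tau>}. alpha t \<omega>)"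
        by (rule sum_mono2[OF _ S'sub]) (use alpha_nn \<omega> in auto)
      also have "\<dots> \<le> lvl * max (\<Sum>j\<in>noncf E L \<tau>. R_ind P alpha j \<omega>) 1"
        using LORD_facts[OF LORD_star \<tau>1 \<omega>] by blast
      finally show ?thesis .
    next
      case SAFFRON_star
      define N where "N = noncf E L \<tau>"
      define X where "X = conflict_set E L \<tau> \<union> {\<tau>}"
      define q where "q j = alpha j \<omega> / (1 - lam j \<omega>) * (if P j \<omega> > lam j \<omega> then 1 else 0)" for j
      define g where "g j = alpha j \<omega> / (1 - lam j \<omega>)" for j
      have finN: "finite N" unfolding N_def by (rule finite_noncf)
      have finX: "finite X" unfolding X_def using finite_conflict by simp
      have Xge: "j \<ge> 1" if "j \<in> X" for j using that conf_ge1 \<tau>1 unfolding X_def by auto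
      have Nge: "j \<ge> 1" if "j \<in> N" for j using that noncf_ge1 unfolding N_def by auto
      have qg: "0 \<le> q j \<and> q j \<le> g j" if "j \<ge> 1" for j
        using g_nn[OF that \<omega> SAFFRON_star] unfolding q_def g_def by auto
      have "(\<Sum>t\<in>S. Q t \<omega>) = (\<Sum>t\<in>S'. q t)"
        by (rule sumQ) (simp add: Q_def q_def SAFFRON_star)
      also have "\<dots> = (\<Sum>t\<in>S' \<inter> N. q t) + (\<Sum>t\<in>S' - N. q t)"
        by (rule sum.Int_Diff[OF finS'])
      also have "(\<Sum>t\<in>S' \<inter> N. q t) \<le> (\<Sum>t\<in>N. q t)"
        by (rule sum_mono2[OF finN]) (use qg Nge in auto)
      also have "(\<Sum>t\<in>S' - N. q t) \<le> (\<Sum>t\<in>S' - N. g t)"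
        by (rule sum_mono) (use qg S'ge in auto)
      also have "(\<Sum>t\<in>S' - N. g t) \<le> (\<Sum>t\<in>X. g t)"
      proof (rule sum_mono2[OF finX])
        show "S' - N \<subseteq> X"
        proof
          fix t assume t: "t \<in> S' - N"
          then have t1: "1 \<le> t" "t \<le> \<tau>" using S'sub by auto
          show "t \<in> X"
          proof (cases "t = \<tau>")
            case True then show ?thesis by (simp add: X_def)
          next
            case False
            then have "t \<le> \<tau> - 1" using t1 by simp
            then show ?thesis using t t1 unfolding X_def N_def noncf_def by auto
          qed
        qed
        show "\<And>b. b \<in> X - (S' - N) \<Longrightarrow> 0 \<le> g b" using qg Xge by (meson DiffD1 order_trans)
      qed
      also have "(\<Sum>t\<in>N. q t) + (\<Sum>t\<in>X. g t) \<le> lvl * max (\<Sum>j\<in>noncf E L \<tau>. R_ind P alpha j \<omega>) 1"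
        using SAFF_facts[OF SAFFRON_star \<tau>1 \<omega>] unfolding N_def X_def q_def g_def by blast
      finally show ?thesis by simp
    qed
    show ?thesis using main lvl_card[of \<omega> \<tau>] unfolding \<tau>_def by linarith
  qed
  show ?thesis
  proof (cases "integrable M (\<lambda>\<omega>. max (real (card (rej_set E P alpha (T \<omega>) \<omega>))) 1)")
    case False
    then show ?thesis unfolding mFDR_def using lvl0 by (simp add: not_integrable_integral_eq)
  next
    case True
    have D1: "1 \<le> (\<integral>\<omega>. max (real (card (rej_set E P alpha (T \<omega>) \<omega>))) 1 \<partial>M)"
    proof -
      have "(\<integral>\<omega>. 1 \<partial>M) \<le> (\<integral>\<omega>. max (real (card (rej_set E P alpha (T \<omega>) \<omega>))) 1 \<partial>M)"
        by (rule integral_mono[OF _ True]) auto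
      then show ?thesis by (simp add: prob_space)
    qed
    have "(\<integral>\<omega>. real (card (rej_set E P alpha (T \<omega>) \<omega> \<inter> H0)) \<partial>M)
        \<le> (\<integral>\<omega>. (\<Sum>t\<in>S. indicator (A t) \<omega> * R_ind P alpha t \<omega>) \<partial>M)"
    proof (rule integral_mono_AE')
      show "integrable M (\<lambda>\<omega>. \<Sum>t\<in>S. indicator (A t) \<omega> * R_ind P alpha t \<omega>)"
        by (intro Bochner_Integration.integrable_sum indRint)
      show "AE \<omega> in M. real (card (rej_set E P alpha (T \<omega>) \<omega> \<inter> H0)) \<le> (\<Sum>t\<in>S. indicator (A t) \<omega> * R_ind P alpha t \<omega>)"
        using B AE_space by eventually_elim (use Npw in blast)
      show "AE \<omega> in M. 0 \<le> (\<Sum>t\<in>S. indicator (A t) \<omega> * R_ind P alpha t \<omega>)"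
        by (rule AE_I2, rule sum_nonneg) (auto simp: indicator_def R_ind_def)
    qed
    also have "\<dots> = (\<Sum>t\<in>S. (\<integral>\<omega>. indicator (A t) \<omega> * R_ind P alpha t \<omega> \<partial>M))"
      by (rule Bochner_Integration.integral_sum) (rule indRint)
    also have "\<dots> \<le> (\<Sum>t\<in>S. (\<integral>\<omega>. Q t \<omega> \<partial>M))"
      by (rule sum_mono) (rule Qterm)
    also have "\<dots> = (\<integral>\<omega>. (\<Sum>t\<in>S. Q t \<omega>) \<partial>M)"
      by (rule Bochner_Integration.integral_sum[symmetric]) (rule Qint)
    also have "\<dots> \<le> (\<integral>\<omega>. lvl * max (real (card (rej_set E P alpha (T \<omega>) \<omega>))) 1 \<partial>M)"
    proof (rule integral_mono_AE)
      show "integrable M (\<lambda>\<omega>. \<Sum>t\<in>S. Q t \<omega>)" by (intro Bochner_Integration.integrable_sum Qint)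
      show "integrable M (\<lambda>\<omega>. lvl * max (real (card (rej_set E P alpha (T \<omega>) \<omega>))) 1)"
        using True by (rule integrable_mult_right)
      show "AE \<omega> in M. (\<Sum>t\<in>S. Q t \<omega>) \<le> lvl * max (real (card (rej_set E P alpha (T \<omega>) \<omega>))) 1"
        using B AE_space by eventually_elim (use Qpw in blast)
    qed
    also have "\<dots> = lvl * (\<integral>\<omega>. max (real (card (rej_set E P alpha (T \<omega>) \<omega>))) 1 \<partial>M)"
      by simp
    finally have NL: "(\<integral>\<omega>. real (card (rej_set E P alpha (T \<omega>) \<omega> \<inter> H0)) \<partial>M)
        \<le> lvl * (\<integral>\<omega>. max (real (card (rej_set E P alpha (T \<omega>) \<omega>))) 1 \<partial>M)" .
    show ?thesis unfolding mFDR_def using D1 NL by (simp add: pos_divide_le_eq)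
  qed
qed

end
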